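(* Let $M$ be a compact translating soliton with boundary in $\mathbb{H}^2\times\mathbb{R}$. Then the height function of $M$ cannot attain a local maximum at any interior point of $M$.
   Context: $\mathbb{H}^2\times\mathbb{R}$ carries the product metric $\langle\cdot,\cdot\rangle$ of the hyperbolic plane of curvature $-1$ and the real line; the height function is the projection onto $\mathbb{R}$ and $\partial_z$ its gradient. An oriented immersed surface $M$ with unit normal $\eta$ and mean curvature $H_M$ (half the trace of the second fundamental form with respect to $\eta$) is a translating soliton if $H_M=\langle\eta,\partial_z\rangle$ at every point. *)

theory Defs
  imports "HOL-Analysis.Analysis"
begin

text \<open>Model of H^2 x R: the upper half-space {(x,y,z). y > 0} with the product metric
  (dx^2 + dy^2)/y^2 + dz^2 (upper half-plane model of the hyperbolic plane of curvature -1,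
  times the real line).\<close>

type_synonym pt3 = "real \<times> real \<times> real"

definition in_H2R :: "pt3 \<Rightarrow> bool" where
  "in_H2R q \<longleftrightarrow> fst (snd q) > 0"

definition height :: "pt3 \<Rightarrow> real" where
  "height q = snd (snd q)"

definition gH :: "pt3 \<Rightarrow> pt3 \<Rightarrow> pt3 \<Rightarrow> real" where
  "gH q v w = (fst v * fst w + fst (snd v) * fst (snd w)) / (fst (snd q))^2
              + snd (snd v) * snd (snd w)"

text \<open>Gradient of the height function, partial_z.\<close>
definition dz :: pt3 where "dz = (0, 0, 1)"

text \<open>Christoffel term Gamma(q)(v,w) of the Levi-Civita connection of gH:
  Gamma^x_xy = Gamma^x_yx = -1/y, Gamma^y_xx = 1/y, Gamma^y_yy = -1/y, all others 0.\<close>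
definition Gam :: "pt3 \<Rightarrow> pt3 \<Rightarrow> pt3 \<Rightarrow> pt3" where
  "Gam q v w =
     (- (fst v * fst (snd w) + fst (snd v) * fst w) / fst (snd q),
      (fst v * fst w - fst (snd v) * fst (snd w)) / fst (snd q),
      0)"

definition ecoord :: "nat \<Rightarrow> real \<times> real" where
  "ecoord i = (if i = 0 then (1, 0) else (0, 1))"

definition pd :: "(real \<times> real \<Rightarrow> pt3) \<Rightarrow> nat \<Rightarrow> real \<times> real \<Rightarrow> pt3" where
  "pd X i p = frechet_derivative X (at p) (ecoord i)"

definition pd2 :: "(real \<times> real \<Rightarrow> pt3) \<Rightarrow> nat \<Rightarrow> nat \<Rightarrow> real \<times> real \<Rightarrow> pt3" where
  "pd2 X i j p = pd (pd X j) i p"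

definition C2_immersion :: "(real \<times> real) set \<Rightarrow> (real \<times> real \<Rightarrow> pt3) \<Rightarrow> bool" where
  "C2_immersion U X \<longleftrightarrow>
     open U \<and>
     (\<forall>p\<in>U. in_H2R (X p)) \<and>
     (\<forall>p\<in>U. X differentiable (at p)) \<and>
     (\<forall>j\<in>{0,1}. \<forall>p\<in>U. pd X j differentiable (at p)) \<and>
     (\<forall>i\<in>{0,1}. \<forall>j\<in>{0,1}. continuous_on U (pd2 X i j)) \<and>
     (\<forall>p\<in>U. \<forall>a b. a *\<^sub>R pd X 0 p + b *\<^sub>R pd X 1 p = 0 \<longrightarrow> a = 0 \<and> b = 0)"

definition unit_normal :: "(real \<times> real) set \<Rightarrow> (real \<times> real \<Rightarrow> pt3) \<Rightarrow> (real \<times> real \<Rightarrow> pt3) \<Rightarrow> bool" where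
  "unit_normal U X eta \<longleftrightarrow>
     continuous_on U eta \<and>
     (\<forall>p\<in>U. gH (X p) (eta p) (eta p) = 1 \<and>
             gH (X p) (eta p) (pd X 0 p) = 0 \<and> gH (X p) (eta p) (pd X 1 p) = 0)"

text \<open>First fundamental form g_ij and second fundamental form
  h_ij = < nabla_{X_i} X_j , eta > with respect to eta.\<close>
definition fff :: "(real \<times> real \<Rightarrow> pt3) \<Rightarrow> nat \<Rightarrow> nat \<Rightarrow> real \<times> real \<Rightarrow> real" where
  "fff X i j p = gH (X p) (pd X i p) (pd X j p)"

definition sff :: "(real \<times> real \<Rightarrow> pt3) \<Rightarrow> (real \<times> real \<Rightarrow> pt3) \<Rightarrow> nat \<Rightarrow> nat \<Rightarrow> real \<times> real \<Rightarrow> real" where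
  "sff X eta i j p = gH (X p) (pd2 X i j p + Gam (X p) (pd X i p) (pd X j p)) (eta p)"

text \<open>Mean curvature: half the trace of the second fundamental form, H = (1/2) g^{ij} h_ij.\<close>
definition mean_curv :: "(real \<times> real \<Rightarrow> pt3) \<Rightarrow> (real \<times> real \<Rightarrow> pt3) \<Rightarrow> real \<times> real \<Rightarrow> real" where
  "mean_curv X eta p =
     (fff X 1 1 p * sff X eta 0 0 p - 2 * fff X 0 1 p * sff X eta 0 1 p
        + fff X 0 0 p * sff X eta 1 1 p)
     / (2 * (fff X 0 0 p * fff X 1 1 p - (fff X 0 1 p)^2))"

definition translating_soliton :: "(real \<times> real) set \<Rightarrow> (real \<times> real \<Rightarrow> pt3) \<Rightarrow> (real \<times> real \<Rightarrow> pt3) \<Rightarrow> bool" where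
  "translating_soliton U X eta \<longleftrightarrow>
     C2_immersion U X \<and> unit_normal U X eta \<and>
     (\<forall>p\<in>U. mean_curv X eta p = gH (X p) (eta p) dz)"

end

theory Submission imports Defs begin

lemma bl_height: "bounded_linear height"
  unfolding height_def by (intro bounded_linear_compose[OF bounded_linear_snd] bounded_linear_snd)

lemma hd_pd:
  fixes G :: "real \<times> real \<Rightarrow> pt3"
  assumes "G differentiable (at q)"
  shows "((\<lambda>x. height (G x)) has_derivative
           (\<lambda>v. fst v * height (pd G 0 q) + snd v * height (pd G 1 q))) (at q)"
proof -
  let ?L = "frechet_derivative G (at q)"
  have d: "(G has_derivative ?L) (at q)" using assms frechet_derivative_works by blast
  have l: "linear ?L" using d has_derivative_linear by blast
  have "((\<lambda>x. height (G x)) has_derivative (\<lambda>v. height (?L v))) (at q)"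
    using bounded_linear.has_derivative[OF bl_height d] .
  moreover have "(\<lambda>v. height (?L v)) = (\<lambda>v. fst v * height (pd G 0 q) + snd v * height (pd G 1 q))"
  proof
    fix v :: "real \<times> real"
    have v: "v = fst v *\<^sub>R (1,0) + snd v *\<^sub>R (0,1)" by (cases v) simp
    have "?L (fst v *\<^sub>R (1,0) + snd v *\<^sub>R (0,1)) = fst v *\<^sub>R ?L (1,0) + snd v *\<^sub>R ?L (0,1)"
      by (simp only: linear_add[OF l] linear_cmul[OF l])
    then have "?L v = fst v *\<^sub>R ?L (1,0) + snd v *\<^sub>R ?L (0,1)" using v by metis
    then show "height (?L v) = fst v * height (pd G 0 q) + snd v * height (pd G 1 q)"
      by (simp add: pd_def ecoord_def height_def)
  qed
  ultimately show ?thesis by simp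
qed

lemma line_deriv:
  fixes \<phi> :: "real \<times> real \<Rightarrow> real"
  assumes "(\<phi> has_derivative L) (at (q + t *\<^sub>R v))"
  shows "((\<lambda>s. \<phi> (q + s *\<^sub>R v)) has_real_derivative L v) (at t)"
proof -
  have l: "linear L" using assms has_derivative_linear by blast
  have "((\<lambda>s. q + s *\<^sub>R v) has_derivative (\<lambda>h. h *\<^sub>R v)) (at t)"
    by (auto intro!: derivative_eq_intros)
  from has_derivative_compose[OF this assms]
  have "((\<lambda>s. \<phi> (q + s *\<^sub>R v)) has_derivative (\<lambda>h. L (h *\<^sub>R v))) (at t)" by simp
  moreover have "(\<lambda>h. L (h *\<^sub>R v)) = (*) (L v)"
    by (rule ext) (simp add: linear_cmul[OF l])
  ultimately show ?thesis by (simp add: has_field_derivative_def)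
qed

lemma part0:
  fixes \<phi> :: "real \<times> real \<Rightarrow> real"
  assumes "(\<phi> has_derivative L) (at (p + (s, c)))"
  shows "((\<lambda>s. \<phi> (p + (s, c))) has_real_derivative L (1,0)) (at s)"
proof -
  have e: "\<And>s. p + (0,c) + s *\<^sub>R (1,0) = p + (s, c)" by (simp add: algebra_simps)
  show ?thesis using line_deriv[of \<phi> L "p + (0,c)" s "(1,0)"] assms by (simp only: e)
qed

lemma part1:
  fixes \<phi> :: "real \<times> real \<Rightarrow> real"
  assumes "(\<phi> has_derivative L) (at (p + (c, s)))"
  shows "((\<lambda>s. \<phi> (p + (c, s))) has_real_derivative L (0,1)) (at s)"
proof -
  have e: "\<And>s. p + (c,0) + s *\<^sub>R (0,1) = p + (c, s)" by (simp add: algebra_simps)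
  show ?thesis using line_deriv[of \<phi> L "p + (c,0)" s "(0,1)"] assms by (simp only: e)
qed


lemma norm_pair_le: "norm ((s::real), (t::real)) \<le> \<bar>s\<bar> + \<bar>t\<bar>"
proof -
  have "norm (s,t) = norm ((s,0::real) + (0::real,t))" by simp
  also have "\<dots> \<le> norm (s,0::real) + norm (0::real,t)" by (rule norm_triangle_ineq)
  finally show ?thesis by simp
qed

theorem proposition5p3:
  fixes U :: "(real \<times> real) set" and X eta :: "real \<times> real \<Rightarrow> real \<times> real \<times> real"
  assumes "translating_soliton U X eta"
    and "p \<in> U"
  shows "\<not> (\<exists>e>0. \<forall>q\<in>U. dist q p < e \<longrightarrow> height (X q) \<le> height (X p))"
proof
  assume "\<exists>e>0. \<forall>q\<in>U. dist q p < e \<longrightarrow> height (X q) \<le> height (X p)"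
  then obtain e where e: "e > 0" "\<forall>q\<in>U. dist q p < e \<longrightarrow> height (X q) \<le> height (X p)" by blast
  have imm: "C2_immersion U X" and un: "unit_normal U X eta"
    and sol: "\<forall>p\<in>U. mean_curv X eta p = gH (X p) (eta p) dz"
    using assms(1) unfolding translating_soliton_def by auto
  have oU: "open U" using imm unfolding C2_immersion_def by auto
  define f where "f q = height (X q)" for q
  define F where "F j q = height (pd X j q)" for j q
  define S where "S i j q = height (pd2 X i j q)" for i j q
  have df: "(f has_derivative (\<lambda>v. fst v * F 0 q + snd v * F 1 q)) (at q)" if "q \<in> U" for q
    using hd_pd[of X q] imm that unfolding C2_immersion_def f_def F_def by auto
  have dF: "(F j has_derivative (\<lambda>v. fst v * S 0 j q + snd v * S 1 j q)) (at q)"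
    if "q \<in> U" "j \<in> {0,1}" for q j
  proof -
    have "pd X j differentiable (at q)" using imm that unfolding C2_immersion_def by auto
    from hd_pd[OF this] show ?thesis unfolding F_def S_def pd2_def by (simp add: fun_eq_iff)
  qed
  have cS: "isCont (S i j) q" if "q \<in> U" "i \<in> {0,1}" "j \<in> {0,1}" for i j q
  proof -
    have "continuous_on U (pd2 X i j)" using imm that unfolding C2_immersion_def by auto
    then have "isCont (pd2 X i j) q" using oU that continuous_on_eq_continuous_at by blast
    then show ?thesis unfolding S_def
      using bounded_linear.isCont[OF bl_height] by blast
  qed
  obtain r where r: "r > 0" "ball p r \<subseteq> U" using oU assms(2) open_contains_ball by blast
  define d where "d = min e r"
  have d: "d > 0" using e r unfolding d_def by simp
  have loc: "q \<in> U \<and> f q \<le> f p" if "dist q p < d" for q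
  proof -
    have "q \<in> U" using that r unfolding d_def by (auto simp: dist_commute)
    then show ?thesis using e that unfolding d_def f_def by auto
  qed
  have F0p: "F j p = 0" if "j \<in> {0,1}" for j
  proof -
    define v :: "real \<times> real" where "v = (if j = 0 then (1,0) else (0,1))"
    have nv: "norm v = 1" unfolding v_def by simp
    have "(f has_derivative (\<lambda>v. fst v * F 0 p + snd v * F 1 p)) (at (p + 0 *\<^sub>R v))"
      using df[OF assms(2)] by simp
    from line_deriv[OF this]
    have D: "((\<lambda>t. f (p + t *\<^sub>R v)) has_real_derivative F j p) (at 0)"
      using that unfolding v_def by auto
    show ?thesis
    proof (rule DERIV_local_max[OF D d], intro allI impI)
      fix y :: real assume "\<bar>0 - y\<bar> < d"
      then have "dist (p + y *\<^sub>R v) p < d" by (simp add: dist_norm nv)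
      then show "f (p + y *\<^sub>R v) \<le> f (p + 0 *\<^sub>R v)" using loc by simp
    qed
  qed
  have Q: "a * (a * S 0 0 p + b * S 1 0 p) + b * (a * S 0 1 p + b * S 1 1 p) \<le> 0" for a b
  proof (rule ccontr)
    define c where "c = a * (a * S 0 0 p + b * S 1 0 p) + b * (a * S 0 1 p + b * S 1 1 p)"
    assume "\<not> a * (a * S 0 0 p + b * S 1 0 p) + b * (a * S 0 1 p + b * S 1 1 p) \<le> 0"
    then have c: "c > 0" unfolding c_def by simp
    define v where "v = (a, b)"
    define \<psi> where "\<psi> t = a * F 0 (p + t *\<^sub>R v) + b * F 1 (p + t *\<^sub>R v)" for t
    have inU: "p + t *\<^sub>R v \<in> U" if "\<bar>t\<bar> * norm v < d" for t
      using loc[of "p + t *\<^sub>R v"] that by (simp add: dist_norm)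
    have dphi: "((\<lambda>t. f (p + t *\<^sub>R v)) has_real_derivative \<psi> t) (at t)" if "\<bar>t\<bar> * norm v < d" for t
      using line_deriv[OF df[OF inU[OF that]]] unfolding \<psi>_def v_def by simp
    have "((\<lambda>t. F j (p + t *\<^sub>R v)) has_real_derivative (a * S 0 j p + b * S 1 j p)) (at 0)"
      if "j \<in> {0,1}" for j
    proof -
      have "(F j has_derivative (\<lambda>v. fst v * S 0 j p + snd v * S 1 j p)) (at (p + 0 *\<^sub>R v))"
        using dF[OF assms(2) that] by simp
      from line_deriv[OF this] show ?thesis unfolding v_def by simp
    qed
    then have dpsi: "(\<psi> has_real_derivative c) (at 0)"
      unfolding \<psi>_def c_def by (auto intro!: derivative_eq_intros)
    have F0: "\<psi> 0 = 0" unfolding \<psi>_def using F0p by simp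
    obtain d1 where d1: "d1 > 0" "\<forall>h>0. h < d1 \<longrightarrow> \<psi> 0 < \<psi> (0 + h)"
      using DERIV_pos_inc_right[OF dpsi c] by blast
    define h where "h = min d1 (d / (norm v + 1)) / 2"
    have "d / (norm v + 1) > 0" using d by (simp add: add_nonneg_pos)
    then have h: "h > 0" "h < d1" using d1 unfolding h_def by auto
    have hv: "h * norm v < d"
    proof -
      have "h \<le> (d / (norm v + 1)) / 2"
        unfolding h_def by (intro divide_right_mono) auto
      then have "h * norm v \<le> (d / (norm v + 1)) / 2 * norm v"
        by (intro mult_right_mono) auto
      also have "\<dots> = d * (norm v / (norm v + 1)) / 2" by simp
      also have "\<dots> < d"
      proof -
        have "norm v / (norm v + 1) \<le> 1" by (simp add: add_nonneg_pos divide_le_eq_1)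
        then have "d * (norm v / (norm v + 1)) \<le> d" using d mult_left_le[of "norm v / (norm v + 1)" d] by linarith
        moreover have "\<And>x::real. x \<le> d \<Longrightarrow> x / 2 < d" using d by linarith
        ultimately show ?thesis by blast
      qed
      finally show ?thesis .
    qed
    have "\<exists>z>0. z < h \<and> f (p + h *\<^sub>R v) - f (p + 0 *\<^sub>R v) = (h - 0) * \<psi> z"
    proof (rule MVT2[OF h(1)])
      fix x assume "0 \<le> x" "x \<le> h"
      then have "\<bar>x\<bar> * norm v < d" using hv by (smt (verit) mult_right_mono norm_ge_zero)
      then show "((\<lambda>t. f (p + t *\<^sub>R v)) has_real_derivative \<psi> x) (at x)" by (rule dphi)
    qed
    then obtain z where z: "z > 0" "z < h" "f (p + h *\<^sub>R v) - f p = h * \<psi> z" by auto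
    have "\<psi> z > 0" using d1 z h F0 by auto
    then have "f (p + h *\<^sub>R v) > f p" using z h by (smt (verit) mult_pos_pos)
    moreover have "f (p + h *\<^sub>R v) \<le> f p" using loc[of "p + h *\<^sub>R v"] hv h by (simp add: dist_norm)
    ultimately show False by simp
  qed
  have close: "\<bar>S 1 0 p - S 0 1 p\<bar> < 2 * \<epsilon>" if eps: "\<epsilon> > 0" for \<epsilon>
  proof -
    obtain \<delta>1 where \<delta>1: "\<delta>1 > 0" "\<forall>q. dist q p < \<delta>1 \<longrightarrow> dist (S 1 0 q) (S 1 0 p) < \<epsilon>"
      using cS[OF assms(2), of 1 0] eps unfolding continuous_at_eps_delta by auto
    obtain \<delta>2 where \<delta>2: "\<delta>2 > 0" "\<forall>q. dist q p < \<delta>2 \<longrightarrow> dist (S 0 1 q) (S 0 1 p) < \<epsilon>"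
      using cS[OF assms(2), of 0 1] eps unfolding continuous_at_eps_delta by auto
    define h where "h = min (min \<delta>1 \<delta>2) d / 3"
    have h: "h > 0" using \<delta>1 \<delta>2 d unfolding h_def by auto
    have hm: "2 * h < \<delta>1" "2 * h < \<delta>2" "2 * h < d" using \<delta>1 \<delta>2 d unfolding h_def by auto
    have box: "dist (p + (s, t)) p \<le> 2 * h" if "0 \<le> s" "s \<le> h" "0 \<le> t" "t \<le> h" for s t
    proof -
      have "dist (p + (s, t)) p = norm (s, t)" by (simp add: dist_norm)
      also have "\<dots> \<le> \<bar>s\<bar> + \<bar>t\<bar>" by (rule norm_pair_le)
      also have "\<dots> \<le> 2 * h" using that h by linarith
      finally show ?thesis .
    qed
    have boxU: "p + (s, t) \<in> U" if "0 \<le> s" "s \<le> h" "0 \<le> t" "t \<le> h" for s t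
      using loc[of "p + (s,t)"] box[OF that] hm by auto
    have "\<exists>z>0. z < h \<and> (f (p + (h, h)) - f (p + (h, 0))) - (f (p + (0, h)) - f (p + (0, 0)))
            = (h - 0) * (F 0 (p + (z, h)) - F 0 (p + (z, 0)))"
    proof (rule MVT2[OF h])
      fix x assume x: "0 \<le> x" "x \<le> h"
      have u1: "p + (x, h) \<in> U" and u2: "p + (x, 0) \<in> U" using boxU x h by auto
      have a: "((\<lambda>s. f (p + (s, h))) has_real_derivative F 0 (p + (x, h))) (at x)"
        using part0[OF df[OF u1]] by simp
      have b: "((\<lambda>s. f (p + (s, 0))) has_real_derivative F 0 (p + (x, 0))) (at x)"
        using part0[OF df[OF u2]] by simp
      show "((\<lambda>s. f (p + (s, h)) - f (p + (s, 0))) has_real_derivative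
              F 0 (p + (x, h)) - F 0 (p + (x, 0))) (at x)"
        using a b by (rule DERIV_diff)
    qed
    then obtain \<xi> where \<xi>: "\<xi> > 0" "\<xi> < h"
      "(f (p + (h, h)) - f (p + (h, 0))) - (f (p + (0, h)) - f (p + (0, 0)))
            = h * (F 0 (p + (\<xi>, h)) - F 0 (p + (\<xi>, 0)))" by auto
    have "\<exists>z>0. z < h \<and> F 0 (p + (\<xi>, h)) - F 0 (p + (\<xi>, 0)) = (h - 0) * S 1 0 (p + (\<xi>, z))"
    proof (rule MVT2[OF h])
      fix x assume x: "0 \<le> x" "x \<le> h"
      have u: "p + (\<xi>, x) \<in> U" using boxU x \<xi> by auto
      show "((\<lambda>t. F 0 (p + (\<xi>, t))) has_real_derivative S 1 0 (p + (\<xi>, x))) (at x)"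
        using part1[OF dF[OF u, of 0]] by simp
    qed
    then obtain \<eta> where \<eta>: "\<eta> > 0" "\<eta> < h"
      "F 0 (p + (\<xi>, h)) - F 0 (p + (\<xi>, 0)) = h * S 1 0 (p + (\<xi>, \<eta>))" by auto
    have "\<exists>z>0. z < h \<and> (f (p + (h, h)) - f (p + (0, h))) - (f (p + (h, 0)) - f (p + (0, 0)))
            = (h - 0) * (F 1 (p + (h, z)) - F 1 (p + (0, z)))"
    proof (rule MVT2[OF h])
      fix x assume x: "0 \<le> x" "x \<le> h"
      have u1: "p + (h, x) \<in> U" and u2: "p + (0, x) \<in> U" using boxU x h by auto
      have a: "((\<lambda>t. f (p + (h, t))) has_real_derivative F 1 (p + (h, x))) (at x)"
        using part1[OF df[OF u1]] by simp
      have b: "((\<lambda>t. f (p + (0, t))) has_real_derivative F 1 (p + (0, x))) (at x)"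
        using part1[OF df[OF u2]] by simp
      show "((\<lambda>t. f (p + (h, t)) - f (p + (0, t))) has_real_derivative
              F 1 (p + (h, x)) - F 1 (p + (0, x))) (at x)"
        using a b by (rule DERIV_diff)
    qed
    then obtain \<xi>' where \<xi>': "\<xi>' > 0" "\<xi>' < h"
      "(f (p + (h, h)) - f (p + (0, h))) - (f (p + (h, 0)) - f (p + (0, 0)))
            = h * (F 1 (p + (h, \<xi>')) - F 1 (p + (0, \<xi>')))" by auto
    have "\<exists>z>0. z < h \<and> F 1 (p + (h, \<xi>')) - F 1 (p + (0, \<xi>')) = (h - 0) * S 0 1 (p + (z, \<xi>'))"
    proof (rule MVT2[OF h])
      fix x assume x: "0 \<le> x" "x \<le> h"
      have u: "p + (x, \<xi>') \<in> U" using boxU x \<xi>' by auto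
      show "((\<lambda>s. F 1 (p + (s, \<xi>'))) has_real_derivative S 0 1 (p + (x, \<xi>'))) (at x)"
        using part0[OF dF[OF u, of 1]] by simp
    qed
    then obtain \<eta>' where \<eta>': "\<eta>' > 0" "\<eta>' < h"
      "F 1 (p + (h, \<xi>')) - F 1 (p + (0, \<xi>')) = h * S 0 1 (p + (\<eta>', \<xi>'))" by auto
    have "h * (h * S 1 0 (p + (\<xi>, \<eta>))) = h * (h * S 0 1 (p + (\<eta>', \<xi>')))"
      using \<xi>(3) \<eta>(3) \<xi>'(3) \<eta>'(3) by (simp add: algebra_simps)
    then have eqS: "S 1 0 (p + (\<xi>, \<eta>)) = S 0 1 (p + (\<eta>', \<xi>'))" using h by simp
    have "dist (S 1 0 (p + (\<xi>, \<eta>))) (S 1 0 p) < \<epsilon>"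
    proof -
      have "dist (p + (\<xi>, \<eta>)) p < \<delta>1" using box[of \<xi> \<eta>] \<xi>(1,2) \<eta>(1,2) hm(1) by linarith
      then show ?thesis using \<delta>1(2) by blast
    qed
    moreover have "dist (S 0 1 (p + (\<eta>', \<xi>'))) (S 0 1 p) < \<epsilon>"
    proof -
      have "dist (p + (\<eta>', \<xi>')) p < \<delta>2" using box[of \<eta>' \<xi>'] \<xi>'(1,2) \<eta>'(1,2) hm(2) by linarith
      then show ?thesis using \<delta>2(2) by blast
    qed
    ultimately show ?thesis using eqS by (simp add: dist_real_def)
  qed
  have sym: "S 1 0 p = S 0 1 p"
  proof (rule ccontr)
    assume "S 1 0 p \<noteq> S 0 1 p"
    then have "\<bar>S 1 0 p - S 0 1 p\<bar> / 2 > 0" by simp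
    from close[OF this] show False by simp
  qed
  obtain x0 y0 z0 where P0: "pd X 0 p = (x0, y0, z0)" by (metis prod.exhaust)
  obtain x1 y1 z1 where P1: "pd X 1 p = (x1, y1, z1)" by (metis prod.exhaust)
  obtain X1 Y Z where Xp: "X p = (X1, Y, Z)" by (metis prod.exhaust)
  obtain e1 e2 e3 where Ep: "eta p = (e1, e2, e3)" by (metis prod.exhaust)
  have z0: "z0 = 0" using F0p[of 0] P0 unfolding F_def height_def by simp
  have z1: "z1 = 0" using F0p[of 1] P1 unfolding F_def height_def by simp
  have Y: "Y > 0" using imm assms(2) Xp unfolding C2_immersion_def in_H2R_def by force
  have indep: "\<forall>a b. a *\<^sub>R pd X 0 p + b *\<^sub>R pd X 1 p = 0 \<longrightarrow> a = 0 \<and> b = 0"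
    using imm assms(2) unfolding C2_immersion_def by blast
  have det: "x0 * y1 - y0 * x1 \<noteq> 0"
  proof
    assume dz0: "x0 * y1 - y0 * x1 = 0"
    have c1: "y1 * x0 - y0 * x1 = 0" using dz0 by (simp add: mult.commute)
    have "y1 *\<^sub>R pd X 0 p + (- y0) *\<^sub>R pd X 1 p = (y1 * x0 - y0 * x1, y1 * y0 - y0 * y1, 0)"
      unfolding P0 P1 z0 z1 by simp
    also have "\<dots> = 0" unfolding c1 by (simp add: zero_prod_def mult.commute)
    finally have "y1 *\<^sub>R pd X 0 p + (- y0) *\<^sub>R pd X 1 p = 0" .
    then have "y1 = 0 \<and> y0 = 0" using indep[rule_format, of y1 "- y0"] by simp
    moreover have "x1 *\<^sub>R pd X 0 p + (- x0) *\<^sub>R pd X 1 p = 0"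
    proof -
      have c2: "x1 * y0 - x0 * y1 = 0" using dz0 by (simp add: mult.commute)
      have "x1 *\<^sub>R pd X 0 p + (- x0) *\<^sub>R pd X 1 p = (x1 * x0 - x0 * x1, x1 * y0 - x0 * y1, 0)"
        unfolding P0 P1 z0 z1 by simp
      also have "\<dots> = 0" unfolding c2 by (simp add: zero_prod_def mult.commute)
      finally show ?thesis .
    qed
    then have "x1 = 0 \<and> x0 = 0" using indep[rule_format, of x1 "- x0"] by simp
    ultimately have "1 *\<^sub>R pd X 0 p + 0 *\<^sub>R pd X 1 p = 0" using P0 z0 by (simp add: zero_prod_def)
    then show False using indep[rule_format, of 1 0] by simp
  qed
  have n0: "gH (X p) (eta p) (pd X 0 p) = 0" and n1: "gH (X p) (eta p) (pd X 1 p) = 0"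
    and nn: "gH (X p) (eta p) (eta p) = 1"
    using un assms(2) unfolding unit_normal_def by auto
  have o0: "e1 * x0 + e2 * y0 = 0" using n0 Y unfolding gH_def Xp Ep P0 z0 by simp
  have o1: "e1 * x1 + e2 * y1 = 0" using n1 Y unfolding gH_def Xp Ep P1 z1 by simp
  have "e1 * (x0 * y1 - y0 * x1) = y1 * (e1 * x0 + e2 * y0) - y0 * (e1 * x1 + e2 * y1)"
    by (simp add: algebra_simps)
  then have e1: "e1 = 0" using o0 o1 det by simp
  have "e2 * (x0 * y1 - y0 * x1) = x0 * (e1 * x1 + e2 * y1) - x1 * (e1 * x0 + e2 * y0)"
    by (simp add: algebra_simps)
  then have e2: "e2 = 0" using o0 o1 det by simp
  have e3: "e3 * e3 = 1" using nn unfolding gH_def Xp Ep e1 e2 by simp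
  have sff: "sff X eta i j p = e3 * S i j p" for i j
    unfolding sff_def S_def gH_def Gam_def Ep e1 e2 height_def by simp
  have rhs: "gH (X p) (eta p) dz = e3" unfolding gH_def dz_def Ep by simp
  define g00 where "g00 = fff X 0 0 p"
  define g01 where "g01 = fff X 0 1 p"
  define g11 where "g11 = fff X 1 1 p"
  have g00: "g00 = (x0 * x0 + y0 * y0) / Y^2" unfolding g00_def fff_def gH_def Xp P0 z0 by simp
  have g01: "g01 = (x0 * x1 + y0 * y1) / Y^2" unfolding g01_def fff_def gH_def Xp P0 P1 z0 z1 by simp
  have g11: "g11 = (x1 * x1 + y1 * y1) / Y^2" unfolding g11_def fff_def gH_def Xp P1 z1 by simp
  define D where "D = g00 * g11 - g01^2"
  have "D = (x0 * y1 - y0 * x1)^2 / (Y^2)^2"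
    unfolding D_def g00 g01 g11 by (simp add: power2_eq_square divide_simps) (simp add: algebra_simps)
  then have Dpos: "D > 0" using det Y by simp
  have "x0 * x0 + y0 * y0 > 0"
  proof -
    have "x0 \<noteq> 0 \<or> y0 \<noteq> 0" using det by auto
    then show ?thesis by (metis add_nonneg_pos add_pos_nonneg not_real_square_gt_zero zero_le_square)
  qed
  then have g00pos: "g00 > 0" using Y unfolding g00 by simp
  define T where "T = g11 * S 0 0 p - 2 * g01 * S 0 1 p + g00 * S 1 1 p"
  have mc: "mean_curv X eta p = e3 * T / (2 * D)"
    unfolding mean_curv_def sff T_def D_def g00_def g01_def g11_def by (simp add: algebra_simps)
  have "e3 * T / (2 * D) = e3" using sol assms(2) mc rhs by simp
  then have "e3 * T = e3 * (2 * D)" using Dpos by (simp add: divide_simps)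
  then have "e3 * (e3 * T) = e3 * (e3 * (2 * D))" by simp
  then have Teq: "T = 2 * D" using e3 by (simp add: mult.assoc[symmetric])
  have Q1: "(- g01) * ((- g01) * S 0 0 p + g00 * S 1 0 p) + g00 * ((- g01) * S 0 1 p + g00 * S 1 1 p) \<le> 0"
    by (rule Q)
  have Q2: "S 0 0 p \<le> 0" using Q[of 1 0] by simp
  have "g00 * T = ((- g01) * ((- g01) * S 0 0 p + g00 * S 1 0 p) + g00 * ((- g01) * S 0 1 p + g00 * S 1 1 p))
                  + D * S 0 0 p"
    unfolding T_def D_def sym by (simp add: algebra_simps power2_eq_square)
  also have "\<dots> \<le> 0" using Q1 mult_nonneg_nonpos[of D "S 0 0 p"] Q2 Dpos by linarith
  finally have "g00 * T \<le> 0" .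
  moreover have "g00 * T > 0" using g00pos Teq Dpos by simp
  ultimately show False by simp
qed
end
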